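(* Let $(f_n)_{n\ge1}$ be a bounded sequence in $\dot H^1(B^c)$ such that for every sequence of positive reals $(\lambda_n)_n$ with either $\lambda_n\to+\infty$ or $\lambda_n=1$ for all $n$, one has $\lambda_n^{1/2}(\mathcal Pf_n)(\lambda_n\cdot)\rightharpoonup0$ weakly in $\dot H^1(\mathbb R^3)$. Then, up to a subsequence, $\|f_n\|_{L^6(B^c)}\to0$.
   Context: $B^c=\mathbb R^3\setminus B(0,1)$; $\dot H^1(B^c)$ is the space of radial $f\in L^6(B^c)$ with $\nabla f\in L^2(B^c)$ (such $f$ are continuous in $r\in[1,\infty)$). The extension operator $\mathcal P:\dot H^1(B^c)\to\dot H^1_{\rm rad}(\mathbb R^3)$ is $\mathcal Pu(r)=u(r)$ for $r\ge1$ and $\mathcal Pu(r)=u(1)$ for $r<1$. *)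

theory Defs
  imports "HOL-Analysis.Analysis"
begin

text \<open>Radial functions are represented by their profile u :: real => real, u(r) = f(x) for |x| = r.
  rad_H1 S u g: u is a radial function on the region {x. |x| \<in> S} with (weak) radial
  derivative g, u is locally absolutely continuous on S, u is in L^6 and grad u in L^2
  of the region (in polar coordinates, the measure is 4 pi r^2 dr).\<close>

definition rad_H1 :: "real set \<Rightarrow> (real \<Rightarrow> real) \<Rightarrow> (real \<Rightarrow> real) \<Rightarrow> bool" where
  "rad_H1 S u g \<longleftrightarrow>
     (\<forall>x\<in>S. \<forall>y\<in>S. x \<le> y \<longrightarrow>
        set_integrable lborel {x..y} g \<and> u y - u x = (LINT t:{x..y}|lborel. g t)) \<and>
     set_integrable lborel S (\<lambda>r. \<bar>u r\<bar> ^ 6 * r\<^sup>2) \<and>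
     set_integrable lborel S (\<lambda>r. (g r)\<^sup>2 * r\<^sup>2)"

definition Hdot1_ext :: "(real \<Rightarrow> real) \<Rightarrow> (real \<Rightarrow> real) \<Rightarrow> bool" where
  "Hdot1_ext u g \<longleftrightarrow> rad_H1 {1..} u g"

definition Hdot1_rad :: "(real \<Rightarrow> real) \<Rightarrow> (real \<Rightarrow> real) \<Rightarrow> bool" where
  "Hdot1_rad u g \<longleftrightarrow> rad_H1 {0<..} u g"

definition Hdot1_ext_normsq :: "(real \<Rightarrow> real) \<Rightarrow> real" where
  "Hdot1_ext_normsq g = 4 * pi * (LINT r:{1..}|lborel. (g r)\<^sup>2 * r\<^sup>2)"

definition L6_ext_norm :: "(real \<Rightarrow> real) \<Rightarrow> real" where
  "L6_ext_norm u = (4 * pi * (LINT r:{1..}|lborel. \<bar>u r\<bar> ^ 6 * r\<^sup>2)) powr (1/6)"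

definition ext_P :: "(real \<Rightarrow> real) \<Rightarrow> real \<Rightarrow> real" where
  "ext_P u r = (if r \<ge> 1 then u r else u 1)"

text \<open>Weak convergence to 0 in \<open>\<dot>H\<^sup>1(\<real>\<^sup>3)\<close> of a sequence of radial functions:
  each v n lies in radial \<open>\<dot>H\<^sup>1\<close>, and the \<open>\<dot>H\<^sup>1\<close> inner product
  4 pi \<integral> G_n H r^2 dr against any radial test h tends to 0 (for any choice of
  the derivatives G_n, which are determined a.e.).\<close>
definition weak_zero_Hdot1 :: "(nat \<Rightarrow> real \<Rightarrow> real) \<Rightarrow> bool" where
  "weak_zero_Hdot1 v \<longleftrightarrow>
     (\<exists>G. \<forall>n. Hdot1_rad (v n) (G n)) \<and>
     (\<forall>G. (\<forall>n. Hdot1_rad (v n) (G n)) \<longrightarrow>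
        (\<forall>h H. Hdot1_rad h H \<longrightarrow>
           (\<lambda>n. 4 * pi * (LINT r:{0<..}|lborel. G n r * H r * r\<^sup>2)) \<longlonglongrightarrow> 0))"

end

theory Submission
  imports Defs "HOL-Real_Asymp.Real_Asymp"
begin
lemma rad_meas:
  assumes "rad_H1 S u g" "t \<in> S" "\<And>x. x \<ge> t \<Longrightarrow> x \<in> S"
  shows "(\<lambda>s. indicator {t..} s * g s) \<in> borel_measurable borel"
proof (rule borel_measurable_LIMSEQ_real)
  let ?F = "\<lambda>k s. indicator {t..t + real k} s * g (s::real)"
  show "?F k \<in> borel_measurable borel" for k
  proof -
    have "set_integrable lborel {t..t + real k} g"
      using assms unfolding rad_H1_def by auto
    then have "(\<lambda>s. indicator {t..t + real k} s *\<^sub>R g s) \<in> borel_measurable lborel"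
      unfolding set_integrable_def by (rule borel_measurable_integrable)
    then show ?thesis by simp
  qed
  show "(\<lambda>k. ?F k s) \<longlonglongrightarrow> indicator {t..} s * g s" for s
  proof (rule tendsto_eventually)
    obtain k0 :: nat where "real k0 \<ge> s - t" using real_arch_simple by blast
    then show "\<forall>\<^sub>F k in sequentially. ?F k s = indicator {t..} s * g s"
      by (intro eventually_sequentiallyI[of k0]) (auto simp: indicator_def)
  qed
qed

lemma nn_inv_sq:
  assumes "t > 0"
  shows "(\<integral>\<^sup>+s. ennreal (indicator {t..} s / s\<^sup>2) \<partial>lborel) = ennreal (1/t)"
proof -
  have "(\<integral>\<^sup>+s. ennreal (1 / s\<^sup>2) * indicator {t..} s \<partial>lborel) = ennreal (0 - (- 1 / t))"
  proof (rule nn_integral_FTC_atLeast)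
    show "(\<lambda>s::real. 1 / s\<^sup>2) \<in> borel_measurable borel" by measurable
    show "((\<lambda>x. - 1 / x) has_real_derivative 1 / x\<^sup>2) (at x)" if "t \<le> x" for x
      using that assms by (auto intro!: derivative_eq_intros simp: power2_eq_square)
    show "0 \<le> 1 / x\<^sup>2" for x :: real by simp
    show "((\<lambda>x::real. - 1 / x) \<longlongrightarrow> 0) at_top"
      by real_asymp
  qed
  moreover have "(\<integral>\<^sup>+s. ennreal (indicator {t..} s / s\<^sup>2) \<partial>lborel) = (\<integral>\<^sup>+s. ennreal (1 / s\<^sup>2) * indicator {t..} s \<partial>lborel)"
    by (intro nn_integral_cong) (auto simp: indicator_def)
  ultimately show ?thesis by simp
qed

lemma nn_inv_sqrt3:
  assumes "r > 0"
  shows "(\<integral>\<^sup>+s. ennreal (indicator {r..} s / (s * sqrt s)) \<partial>lborel) = ennreal (2 / sqrt r)"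
proof -
  have "(\<integral>\<^sup>+s. ennreal (1 / (s * sqrt s)) * indicator {r..} s \<partial>lborel) = ennreal (0 - (- 2 / sqrt r))"
  proof (rule nn_integral_FTC_atLeast)
    show "(\<lambda>s::real. 1 / (s * sqrt s)) \<in> borel_measurable borel" by measurable
    show "((\<lambda>x. - 2 / sqrt x) has_real_derivative 1 / (x * sqrt x)) (at x)" if "r \<le> x" for x
      using that assms by (auto intro!: derivative_eq_intros simp: field_simps)
    show "0 \<le> 1 / (x * sqrt x)" if "r \<le> x" for x using that assms by simp
    show "((\<lambda>x::real. - 2 / sqrt x) \<longlongrightarrow> 0) at_top"
      by real_asymp
  qed
  moreover have "(\<integral>\<^sup>+s. ennreal (indicator {r..} s / (s * sqrt s)) \<partial>lborel) = (\<integral>\<^sup>+s. ennreal (1 / (s * sqrt s)) * indicator {r..} s \<partial>lborel)"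
    by (intro nn_integral_cong) (auto simp: indicator_def)
  ultimately show ?thesis by simp
qed

lemma nn_sqrt_Icc:
  assumes "1 \<le> s"
  shows "(\<integral>\<^sup>+r. ennreal (indicator {1..s} r * (2 / sqrt r)) \<partial>lborel) \<le> ennreal (4 * sqrt s)"
proof -
  have "(\<integral>\<^sup>+r. ennreal (2 / sqrt r) * indicator {1..s} r \<partial>lborel) = ennreal (4 * sqrt s - 4 * sqrt 1)"
  proof (rule nn_integral_FTC_Icc)
    show "(\<lambda>s::real. 2 / sqrt s) \<in> borel_measurable borel" by measurable
    show "((\<lambda>x. 4 * sqrt x) has_real_derivative 2 / sqrt x) (at x)" if "x \<in> {1..s}" for x
      using that by (auto intro!: derivative_eq_intros simp: field_simps)
    show "0 \<le> 2 / sqrt x" if "x \<in> {1..s}" for x using that by simp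
  qed (use assms in auto)
  moreover have "(\<integral>\<^sup>+r. ennreal (indicator {1..s} r * (2 / sqrt r)) \<partial>lborel) = (\<integral>\<^sup>+r. ennreal (2 / sqrt r) * indicator {1..s} r \<partial>lborel)"
    by (intro nn_integral_cong) (auto simp: indicator_def)
  ultimately show ?thesis using assms by (simp add: ennreal_leI)
qed

lemma nn_inv_sq_Icc:
  assumes "1 \<le> a" "a \<le> b"
  shows "(\<integral>\<^sup>+s. ennreal (indicator {a..b} s / s\<^sup>2) \<partial>lborel) \<le> ennreal (b - a)"
proof -
  have "(\<integral>\<^sup>+s. ennreal (indicator {a..b} s / s\<^sup>2) \<partial>lborel) \<le> (\<integral>\<^sup>+s. indicator {a..b} s \<partial>lborel)"
  proof (intro nn_integral_mono)
    fix s :: real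
    show "ennreal (indicator {a..b} s / s\<^sup>2) \<le> indicator {a..b} s"
    proof (cases "s \<in> {a..b}")
      case True
      then have "1 \<le> s\<^sup>2" using assms by (simp add: one_le_power)
      then have "1 / s\<^sup>2 \<le> 1" by (simp add: divide_le_eq_1)
      then show ?thesis using True by (simp add: ennreal_leI del: divide_le_eq_1)
    qed simp
  qed
  also have "\<dots> = ennreal (b - a)" using assms by simp
  finally show ?thesis .
qed

lemma cs_w:
  fixes g w :: "real \<Rightarrow> real"
  assumes meas[measurable]: "(\<lambda>s. indicator A s * g s) \<in> borel_measurable borel"
    and A[measurable]: "A \<in> sets borel"
    and w[measurable]: "w \<in> borel_measurable borel" and wpos: "\<forall>s\<in>A. w s > 0"
  shows "(\<integral>\<^sup>+s. ennreal (indicator A s * \<bar>g s\<bar>) \<partial>lborel)\<^sup>2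
     \<le> (\<integral>\<^sup>+s. ennreal (indicator A s * (g s ^ 2 * w s)) \<partial>lborel) * (\<integral>\<^sup>+s. ennreal (indicator A s / w s) \<partial>lborel)"
proof -
  let ?f = "\<lambda>s. ennreal (\<bar>indicator A s * g s\<bar> * sqrt (w s))"
  let ?h = "\<lambda>s. ennreal (indicator A s / sqrt (w s))"
  have "(\<integral>\<^sup>+s. ?f s * ?h s \<partial>lborel)\<^sup>2 \<le> (\<integral>\<^sup>+s. ?f s ^ 2 \<partial>lborel) * (\<integral>\<^sup>+s. ?h s ^ 2 \<partial>lborel)"
    by (rule Cauchy_Schwarz_nn_integral) measurable
  moreover have "?f s * ?h s = ennreal (indicator A s * \<bar>g s\<bar>)" for s
    using wpos by (cases "s \<in> A") (auto simp: ennreal_mult''[symmetric] abs_mult)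
  moreover have "?f s ^ 2 = ennreal (indicator A s * (g s ^ 2 * w s))" for s
    using wpos by (cases "s \<in> A") (auto simp: ennreal_power power_mult_distrib abs_mult)
  moreover have "?h s ^ 2 = ennreal (indicator A s / w s)" for s
    using wpos by (cases "s \<in> A") (auto simp: ennreal_power power_divide)
  ultimately show ?thesis by simp
qed

lemma rad_tail_int:
  assumes R: "rad_H1 S u g" and t: "t > 0" "t \<in> S" and sub: "\<And>x. x \<ge> t \<Longrightarrow> x \<in> S"
  shows "set_integrable lborel {t..} g"
proof -
  have meas[measurable]: "(\<lambda>s. indicator {t..} s * g s) \<in> borel_measurable borel"
    using rad_meas[OF R t(2) sub] .
  have cs: "(\<integral>\<^sup>+s. ennreal (indicator {t..} s * \<bar>g s\<bar>) \<partial>lborel)\<^sup>2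
     \<le> (\<integral>\<^sup>+s. ennreal (indicator {t..} s * (g s ^ 2 * s\<^sup>2)) \<partial>lborel) * (\<integral>\<^sup>+s. ennreal (indicator {t..} s / s\<^sup>2) \<partial>lborel)"
    by (rule cs_w) (use t in auto)
  have "set_integrable lborel S (\<lambda>r. (g r)\<^sup>2 * r\<^sup>2)" using R unfolding rad_H1_def by auto
  then have fin: "(\<integral>\<^sup>+s. ennreal (norm (indicator S s *\<^sub>R ((g s)\<^sup>2 * s\<^sup>2))) \<partial>lborel) < \<infinity>"
    unfolding set_integrable_def integrable_iff_bounded by auto
  have "(\<integral>\<^sup>+s. ennreal (indicator {t..} s * (g s ^ 2 * s\<^sup>2)) \<partial>lborel)
      \<le> (\<integral>\<^sup>+s. ennreal (norm (indicator S s *\<^sub>R ((g s)\<^sup>2 * s\<^sup>2))) \<partial>lborel)"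
    by (intro nn_integral_mono) (auto simp: indicator_def sub)
  with fin have f1: "(\<integral>\<^sup>+s. ennreal (indicator {t..} s * (g s ^ 2 * s\<^sup>2)) \<partial>lborel) < \<infinity>"
    by (meson le_less_trans)
  have "(\<integral>\<^sup>+s. ennreal (indicator {t..} s * \<bar>g s\<bar>) \<partial>lborel)\<^sup>2 < \<infinity>"
  proof -
    have "(\<integral>\<^sup>+s. ennreal (indicator {t..} s * (g s ^ 2 * s\<^sup>2)) \<partial>lborel) * (\<integral>\<^sup>+s. ennreal (indicator {t..} s / s\<^sup>2) \<partial>lborel) < \<infinity>"
      unfolding nn_inv_sq[OF t(1)] using f1 by (simp add: ennreal_mult_less_top)
    then show ?thesis using cs by (rule le_less_trans[rotated])
  qed
  then have "(\<integral>\<^sup>+s. ennreal (indicator {t..} s * \<bar>g s\<bar>) \<partial>lborel) < \<infinity>"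
    by (simp add: power_less_top_ennreal)
  moreover have "(\<lambda>s. indicator {t..} s *\<^sub>R g s) \<in> borel_measurable lborel" using meas by simp
  moreover have "norm (indicator {t..} s *\<^sub>R g s) = indicator {t..} s * \<bar>g s\<bar>" for s
    by (simp add: indicator_def)
  ultimately show ?thesis unfolding set_integrable_def integrable_iff_bounded by simp
qed

lemma rad_tail_val:
  assumes R: "rad_H1 S u g" and t: "t > 0" "t \<in> S" and sub: "\<And>x. x \<ge> t \<Longrightarrow> x \<in> S"
  shows "u t = - (LINT s:{t..}|lborel. g s)"
proof (rule ccontr)
  assume ne: "u t \<noteq> - (LINT s:{t..}|lborel. g s)"
  define L where "L = u t + (LINT s:{t..}|lborel. g s)"
  have L0: "L \<noteq> 0" using ne unfolding L_def by linarith
  have int: "set_integrable lborel {t..} g" by (rule rad_tail_int[OF R t sub])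
  have lim1: "((\<lambda>y. LINT s:{t..y}|lborel. g s) \<longlongrightarrow> (LINT s:{t..}|lborel. g s)) at_top"
    by (rule tendsto_set_lebesgue_integral_at_top[OF _ int]) auto
  have ev: "\<forall>\<^sub>F y in at_top. u t + (LINT s:{t..y}|lborel. g s) = u y"
  proof (rule eventually_at_top_linorderI[of t])
    fix y assume "t \<le> y"
    then show "u t + (LINT s:{t..y}|lborel. g s) = u y"
    proof -
      have "u y - u t = (LINT s:{t..y}|lborel. g s)"
        using R t \<open>t \<le> y\<close> sub[of y] unfolding rad_H1_def by blast
      then show ?thesis by simp
    qed
  qed
  have "((\<lambda>y. u t + (LINT s:{t..y}|lborel. g s)) \<longlongrightarrow> L) at_top"
    unfolding L_def by (intro tendsto_add tendsto_const lim1)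
  then have "(u \<longlongrightarrow> L) at_top" using ev by (rule Lim_transform_eventually)
  then have "((\<lambda>y. \<bar>u y\<bar>) \<longlongrightarrow> \<bar>L\<bar>) at_top" by (rule tendsto_rabs)
  moreover have "\<bar>L\<bar> / 2 < \<bar>L\<bar>" using L0 by simp
  ultimately have "\<forall>\<^sub>F y in at_top. \<bar>L\<bar> / 2 < \<bar>u y\<bar>" by (rule order_tendstoD)
  then obtain T0 where T0: "\<And>y. y \<ge> T0 \<Longrightarrow> \<bar>L\<bar> / 2 < \<bar>u y\<bar>"
    by (auto simp: eventually_at_top_linorder)
  define T where "T = max T0 (max t 1)"
  define c where "c = (\<bar>L\<bar> / 2) ^ 6"
  have c0: "c > 0" using L0 unfolding c_def by simp
  have "set_integrable lborel S (\<lambda>r. \<bar>u r\<bar> ^ 6 * r\<^sup>2)" using R unfolding rad_H1_def by auto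
  then have fin: "(\<integral>\<^sup>+s. ennreal (norm (indicator S s *\<^sub>R (\<bar>u s\<bar> ^ 6 * s\<^sup>2))) \<partial>lborel) < \<infinity>"
    (is "?X < _") unfolding set_integrable_def integrable_iff_bounded by auto
  then obtain x where x: "?X = ennreal x" "x \<ge> 0" by (auto simp: less_top_ennreal)
  have "ennreal (c * real k) \<le> ennreal x" for k :: nat
  proof -
    have "ennreal (c * real k) = (\<integral>\<^sup>+s. ennreal c * indicator {T..T + real k} s \<partial>lborel)"
      using c0 by (simp add: nn_integral_cmult ennreal_mult)
    also have "\<dots> \<le> ?X"
    proof (intro nn_integral_mono)
      fix s
      show "ennreal c * indicator {T..T + real k} s \<le> ennreal (norm (indicator S s *\<^sub>R (\<bar>u s\<bar> ^ 6 * s\<^sup>2)))"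
      proof (cases "s \<in> {T..T + real k}")
        case True
        then have s: "s \<ge> T0" "s \<ge> t" "s \<ge> 1" unfolding T_def by auto
        have "c \<le> \<bar>u s\<bar> ^ 6" unfolding c_def using T0[OF s(1)] L0
          by (intro power_mono) auto
        also have "\<dots> \<le> \<bar>u s\<bar> ^ 6 * s\<^sup>2" using s(3)
          by (intro mult_le_cancel_left1[THEN iffD2]) (auto simp: one_le_power)
        finally show ?thesis using True sub[OF s(2)] by (auto intro!: ennreal_leI)
      qed simp
    qed
    finally show ?thesis using x(1) by simp
  qed
  then have "c * real k \<le> x" for k :: nat
    using ennreal_le_iff[OF x(2)] by blast
  moreover obtain k :: nat where "real k > x / c" using reals_Archimedean2[of "x / c"] by blast
  ultimately show False using c0 by (simp add: divide_less_eq mult.commute) (meson not_le)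
qed

lemma K_integrable:
  assumes "t > 0"
  shows "integrable lborel (\<lambda>s. indicator {t..} s / s\<^sup>2 :: real)"
proof (rule integrableI_nn_integral_finite)
  show "(\<lambda>s. indicator {t..} s / s\<^sup>2 :: real) \<in> borel_measurable lborel" by simp
  show "AE x in lborel. 0 \<le> indicator {t..} x / x\<^sup>2" by simp
  show "(\<integral>\<^sup>+s. ennreal (indicator {t..} s / s\<^sup>2) \<partial>lborel) = ennreal (1/t)"
    by (rule nn_inv_sq[OF assms])
qed

lemma test_fun:
  assumes t: "t > 0"
  shows "Hdot1_rad (\<lambda>s. - 1 / max s t) (\<lambda>s. indicator {t..} s / s\<^sup>2)"
proof -
  let ?K = "\<lambda>s. indicator {t..} s / s\<^sup>2 :: real"
  have K: "integrable lborel ?K" by (rule K_integrable[OF t])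
  have part1: "set_integrable lborel {x..y} ?K \<and> (- 1 / max y t) - (- 1 / max x t) = (LINT s:{x..y}|lborel. ?K s)"
    if xy: "0 < x" "x \<le> y" for x y
  proof
    show "set_integrable lborel {x..y} ?K"
      unfolding set_integrable_def by (rule integrable_mult_indicator) (use K in auto)
    show "(- 1 / max y t) - (- 1 / max x t) = (LINT s:{x..y}|lborel. ?K s)"
    proof (cases "y < t")
      case True
      have z: "(\<lambda>s. indicator {x..y} s *\<^sub>R ?K s) = (\<lambda>s. 0)"
        using True by (auto simp: indicator_def fun_eq_iff)
      have "(LINT s:{x..y}|lborel. ?K s) = 0"
        unfolding set_lebesgue_integral_def z by simp
      then show ?thesis using True xy by simp
    next
      case False
      let ?a = "max x t"
      have "(LINT s:{x..y}|lborel. ?K s) = (\<integral>s. 1 / s\<^sup>2 * indicator {?a..y} s \<partial>lborel)"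
        unfolding set_lebesgue_integral_def
        by (rule Bochner_Integration.integral_cong) (use False in \<open>auto simp: indicator_def\<close>)
      also have "\<dots> = (- 1 / y) - (- 1 / ?a)"
      proof (rule integral_FTC_Icc_nonneg)
        show "(\<lambda>s::real. 1 / s\<^sup>2) \<in> borel_measurable borel" by measurable
        show "((\<lambda>x. - 1 / x) has_real_derivative 1 / s\<^sup>2) (at s)" if "s \<in> {?a..y}" for s
          using that t by (auto intro!: derivative_eq_intros simp: power2_eq_square)
        show "0 \<le> 1 / s\<^sup>2" for s :: real by simp
      qed (use False xy in auto)
      finally show ?thesis using False t by simp
    qed
  qed
  have part2: "set_integrable lborel {0<..} (\<lambda>r. \<bar>- 1 / max r t\<bar> ^ 6 * r\<^sup>2)"
    unfolding set_integrable_def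
  proof (rule Bochner_Integration.integrable_bound)
    show "integrable lborel (\<lambda>s. indicator {0<..t} s / t ^ 4 + ?K s / t\<^sup>2)"
    proof (intro Bochner_Integration.integrable_add integrable_divide)
      show "integrable lborel (indicator {0<..t} :: real \<Rightarrow> real)"
        using t by (simp add: integrable_indicator_iff)
    qed (rule K)
    show "(\<lambda>r. indicator {0<..} r *\<^sub>R (\<bar>- 1 / max r t\<bar> ^ 6 * r\<^sup>2)) \<in> borel_measurable lborel"
      by simp
    show "AE r in lborel. norm (indicator {0<..} r *\<^sub>R (\<bar>- 1 / max r t\<bar> ^ 6 * r\<^sup>2))
       \<le> norm (indicator {0<..t} r / t ^ 4 + ?K r / t\<^sup>2)"
    proof (rule AE_I2)
      fix r :: real
      show "norm (indicator {0<..} r *\<^sub>R (\<bar>- 1 / max r t\<bar> ^ 6 * r\<^sup>2))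
       \<le> norm (indicator {0<..t} r / t ^ 4 + ?K r / t\<^sup>2)"
      proof (cases "r \<le> 0")
        case True then show ?thesis by (simp add: indicator_def)
      next
        case False
        show ?thesis
        proof (cases "r \<le> t")
          case True
          have "r\<^sup>2 \<le> t\<^sup>2" using True False by (intro power_mono) auto
          then have "r\<^sup>2 / t ^ 6 \<le> t\<^sup>2 / t ^ 6" using t by (intro divide_right_mono) auto
          also have "t\<^sup>2 / t ^ 6 = 1 / t ^ 4" using t by (simp add: field_simps power_add[symmetric] eval_nat_numeral)
          finally have l1: "r\<^sup>2 / t ^ 6 \<le> 1 / t ^ 4" .
          have lhs: "norm (indicator {0<..} r *\<^sub>R (\<bar>- 1 / max r t\<bar> ^ 6 * r\<^sup>2)) = r\<^sup>2 / t ^ 6"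
            using True False t by (simp add: indicator_def max_def power_divide abs_mult)
          have k0: "0 \<le> ?K r / t\<^sup>2" by simp
          have rhs: "norm (indicator {0<..t} r / t ^ 4 + ?K r / t\<^sup>2) = 1 / t ^ 4 + ?K r / t\<^sup>2"
            using True False t k0 by (simp add: indicator_def)
          show ?thesis unfolding lhs rhs using l1 k0 by linarith
        next
          case True2: False
          have "1 / r ^ 6 * r\<^sup>2 = 1 / r\<^sup>2 * (1 / r\<^sup>2)" using True2 t
            by (simp add: field_simps eval_nat_numeral)
          also have "\<dots> \<le> 1 / r\<^sup>2 * (1 / t\<^sup>2)"
            using True2 t by (intro mult_left_mono divide_left_mono power_mono) auto
          finally show ?thesis using True2 False t
            by (simp add: indicator_def max_def power_divide abs_mult)
        qed
      qed
    qed
  qed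
  have part3: "set_integrable lborel {0<..} (\<lambda>r. (?K r)\<^sup>2 * r\<^sup>2)"
    unfolding set_integrable_def
  proof -
    have "(\<lambda>r. indicator {0<..} r *\<^sub>R ((?K r)\<^sup>2 * r\<^sup>2)) = ?K"
      using t by (auto simp: indicator_def power2_eq_square fun_eq_iff)
    then show "integrable lborel (\<lambda>r. indicator {0<..} r *\<^sub>R ((?K r)\<^sup>2 * r\<^sup>2))" using K by simp
  qed
  show ?thesis unfolding Hdot1_rad_def rad_H1_def using part1 part2 part3 by auto
qed

lemma weak_pointwise:
  assumes W: "weak_zero_Hdot1 v" and t: "t > 0"
  shows "(\<lambda>n. v n t) \<longlonglongrightarrow> 0"
proof -
  obtain G where G: "\<And>n. Hdot1_rad (v n) (G n)" using W unfolding weak_zero_Hdot1_def by blast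
  let ?H = "\<lambda>s. indicator {t..} s / s\<^sup>2 :: real"
  have lim: "(\<lambda>n. 4 * pi * (LINT r:{0<..}|lborel. G n r * ?H r * r\<^sup>2)) \<longlonglongrightarrow> 0"
    using W G test_fun[OF t] unfolding weak_zero_Hdot1_def by blast
  have eq: "(LINT r:{0<..}|lborel. G n r * ?H r * r\<^sup>2) = - v n t" for n
  proof -
    have "(LINT r:{0<..}|lborel. G n r * ?H r * r\<^sup>2) = (LINT r:{t..}|lborel. G n r)"
      unfolding set_lebesgue_integral_def
      by (rule Bochner_Integration.integral_cong) (use t in \<open>auto simp: indicator_def\<close>)
    also have "\<dots> = - v n t"
      using rad_tail_val[of "{0<..}" "v n" "G n" t] G[of n] t unfolding Hdot1_rad_def by auto
    finally show ?thesis .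
  qed
  have "(\<lambda>n. (- 1 / (4 * pi)) * (4 * pi * (LINT r:{0<..}|lborel. G n r * ?H r * r\<^sup>2))) \<longlonglongrightarrow> (- 1 / (4 * pi)) * 0"
    by (intro tendsto_mult tendsto_const lim)
  then show ?thesis unfolding eq by simp
qed

lemma diff_bound:
  assumes R: "rad_H1 S u g" and a: "1 \<le> a" "a \<le> b" "a \<in> S" and sub: "\<And>x. x \<ge> a \<Longrightarrow> x \<in> S"
  shows "(u b - u a)\<^sup>2 \<le> (LINT s:S|lborel. (g s)\<^sup>2 * s\<^sup>2) * (b - a)"
proof -
  have bS: "b \<in> S" using sub a by auto
  have ig: "set_integrable lborel {a..b} g" and eqd: "u b - u a = (LINT s:{a..b}|lborel. g s)"
    using R a bS unfolding rad_H1_def by auto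
  have igS: "set_integrable lborel S (\<lambda>r. (g r)\<^sup>2 * r\<^sup>2)" using R unfolding rad_H1_def by auto
  define A where "A = (LINT s:S|lborel. (g s)\<^sup>2 * s\<^sup>2)"
  have A0: "A \<ge> 0" unfolding A_def set_lebesgue_integral_def
    by (intro Bochner_Integration.integral_nonneg) (auto simp: indicator_def)
  have Aeq: "(\<integral>\<^sup>+s. ennreal (indicator S s * ((g s)\<^sup>2 * s\<^sup>2)) \<partial>lborel) = ennreal A"
    unfolding A_def set_lebesgue_integral_def
    using nn_integral_eq_integral[OF igS[unfolded set_integrable_def]] by simp
  have meas[measurable]: "(\<lambda>s. indicator {a..b} s * g s) \<in> borel_measurable borel"
    using borel_measurable_integrable[OF ig[unfolded set_integrable_def]] by simp
  have "ennreal (norm (LINT s:{a..b}|lborel. g s)) \<le> (\<integral>\<^sup>+s. ennreal (norm (indicator {a..b} s *\<^sub>R g s)) \<partial>lborel)"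
    unfolding set_lebesgue_integral_def
    by (rule integral_norm_bound_ennreal) (use ig in \<open>simp add: set_integrable_def\<close>)
  also have "\<dots> = (\<integral>\<^sup>+s. ennreal (indicator {a..b} s * \<bar>g s\<bar>) \<partial>lborel)"
    by (intro nn_integral_cong) (auto simp: indicator_def)
  finally have n1: "ennreal \<bar>u b - u a\<bar> \<le> (\<integral>\<^sup>+s. ennreal (indicator {a..b} s * \<bar>g s\<bar>) \<partial>lborel)"
    unfolding eqd by simp
  have cs: "(\<integral>\<^sup>+s. ennreal (indicator {a..b} s * \<bar>g s\<bar>) \<partial>lborel)\<^sup>2
     \<le> (\<integral>\<^sup>+s. ennreal (indicator {a..b} s * (g s ^ 2 * s\<^sup>2)) \<partial>lborel) * (\<integral>\<^sup>+s. ennreal (indicator {a..b} s / s\<^sup>2) \<partial>lborel)"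
    by (rule cs_w) (use a in auto)
  have c1: "(\<integral>\<^sup>+s. ennreal (indicator {a..b} s * (g s ^ 2 * s\<^sup>2)) \<partial>lborel) \<le> ennreal A"
    unfolding Aeq[symmetric] by (intro nn_integral_mono) (auto simp: indicator_def sub)
  have c2: "(\<integral>\<^sup>+s. ennreal (indicator {a..b} s / s\<^sup>2) \<partial>lborel) \<le> ennreal (b - a)"
    by (rule nn_inv_sq_Icc) (use a in auto)
  have "ennreal \<bar>u b - u a\<bar> ^ 2 \<le> (\<integral>\<^sup>+s. ennreal (indicator {a..b} s * \<bar>g s\<bar>) \<partial>lborel)\<^sup>2"
    using n1 by (rule power_mono) simp
  also have "\<dots> \<le> ennreal A * ennreal (b - a)"
    using cs c1 c2 by (meson order_trans mult_mono' zero_le)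
  finally have "ennreal ((u b - u a)\<^sup>2) \<le> ennreal (A * (b - a))"
    using A0 a by (simp add: ennreal_power ennreal_mult)
  then show ?thesis unfolding A_def[symmetric] using A0 a by (subst (asm) ennreal_le_iff) auto
qed

lemma hardy_pt:
  assumes R: "rad_H1 {1..} u g" and r: "r \<ge> 1"
  shows "ennreal ((u r)\<^sup>2) \<le> ennreal (2 / sqrt r) *
     (\<integral>\<^sup>+s. ennreal (indicator {r..} s * ((g s)\<^sup>2 * (s * sqrt s))) \<partial>lborel)"
proof -
  have r0: "r > 0" "r \<in> {1..}" using r by auto
  have sub: "\<And>x. x \<ge> r \<Longrightarrow> x \<in> {1..}" using r by auto
  have ig: "set_integrable lborel {r..} g" by (rule rad_tail_int[OF R r0 sub])
  have uv: "u r = - (LINT s:{r..}|lborel. g s)" by (rule rad_tail_val[OF R r0 sub])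
  have meas[measurable]: "(\<lambda>s. indicator {r..} s * g s) \<in> borel_measurable borel"
    by (rule rad_meas[OF R r0(2) sub])
  have "ennreal (norm (LINT s:{r..}|lborel. g s)) \<le> (\<integral>\<^sup>+s. ennreal (norm (indicator {r..} s *\<^sub>R g s)) \<partial>lborel)"
    unfolding set_lebesgue_integral_def
    by (rule integral_norm_bound_ennreal) (use ig in \<open>simp add: set_integrable_def\<close>)
  also have "\<dots> = (\<integral>\<^sup>+s. ennreal (indicator {r..} s * \<bar>g s\<bar>) \<partial>lborel)"
    by (intro nn_integral_cong) (auto simp: indicator_def)
  finally have n1: "ennreal \<bar>u r\<bar> \<le> (\<integral>\<^sup>+s. ennreal (indicator {r..} s * \<bar>g s\<bar>) \<partial>lborel)"
    unfolding uv by simp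
  have cs: "(\<integral>\<^sup>+s. ennreal (indicator {r..} s * \<bar>g s\<bar>) \<partial>lborel)\<^sup>2
     \<le> (\<integral>\<^sup>+s. ennreal (indicator {r..} s * (g s ^ 2 * (s * sqrt s))) \<partial>lborel) * (\<integral>\<^sup>+s. ennreal (indicator {r..} s / (s * sqrt s)) \<partial>lborel)"
    by (rule cs_w) (use r in auto)
  have "ennreal ((u r)\<^sup>2) = ennreal \<bar>u r\<bar> ^ 2" by (simp add: ennreal_power)
  also have "\<dots> \<le> (\<integral>\<^sup>+s. ennreal (indicator {r..} s * \<bar>g s\<bar>) \<partial>lborel)\<^sup>2"
    using n1 by (rule power_mono) simp
  also have "\<dots> \<le> (\<integral>\<^sup>+s. ennreal (indicator {r..} s * ((g s)\<^sup>2 * (s * sqrt s))) \<partial>lborel) * ennreal (2 / sqrt r)"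
    using cs unfolding nn_inv_sqrt3[OF r0(1)] by simp
  finally show ?thesis by (simp add: mult.commute)
qed

lemma hardy:
  assumes R: "rad_H1 {1..} u g"
  shows "\<exists>Q. Q \<in> borel_measurable lborel \<and> (\<forall>r. ennreal (indicator {1..} r * (u r)\<^sup>2) \<le> Q r) \<and>
     (\<integral>\<^sup>+r. Q r \<partial>lborel) \<le> 4 * (\<integral>\<^sup>+s. ennreal (indicator {1..} s * ((g s)\<^sup>2 * s\<^sup>2)) \<partial>lborel)"
proof -
  define G1 where "G1 = (\<lambda>s. indicator {1..} s * g s)"
  have meas[measurable]: "G1 \<in> borel_measurable borel"
    unfolding G1_def by (rule rad_meas[OF R]) auto
  define F where "F = (\<lambda>r s. ennreal (indicator {1..} r * (2 / sqrt r)) *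
      ennreal ((if r \<le> s then 1 else 0) * ((G1 s)\<^sup>2 * (s * sqrt s))))"
  have Fm: "case_prod F \<in> borel_measurable (lborel \<Otimes>\<^sub>M lborel)"
    unfolding F_def by measurable
  define Q where "Q = (\<lambda>r. \<integral>\<^sup>+s. F r s \<partial>lborel)"
  have Qm: "Q \<in> borel_measurable lborel"
    unfolding Q_def by (rule lborel.borel_measurable_nn_integral[OF Fm])
  have Qpt: "ennreal (indicator {1..} r * (u r)\<^sup>2) \<le> Q r" for r
  proof -
    have "(\<integral>\<^sup>+s. F r s \<partial>lborel) = (\<integral>\<^sup>+s. ennreal (indicator {1..} r * (2 / sqrt r)) *
        ennreal (indicator {r..} s * ((g s)\<^sup>2 * (s * sqrt s))) \<partial>lborel)"
      unfolding F_def G1_def by (intro nn_integral_cong) (auto simp: indicator_def)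
    also have "\<dots> = ennreal (indicator {1..} r * (2 / sqrt r)) *
           (\<integral>\<^sup>+s. ennreal (indicator {r..} s * ((g s)\<^sup>2 * (s * sqrt s))) \<partial>lborel)"
    proof (cases "r \<ge> 1")
      case True
      have mr[measurable]: "(\<lambda>s. indicator {r..} s * g s) \<in> borel_measurable borel"
        by (rule rad_meas[OF R]) (use True in auto)
      have e: "(\<lambda>s. ennreal (indicator {r..} s * ((g s)\<^sup>2 * (s * sqrt s)))) = (\<lambda>s. ennreal ((indicator {r..} s * g s)\<^sup>2 * (s * sqrt s)))"
        by (auto simp: indicator_def fun_eq_iff)
      let ?c = "ennreal (indicator {1..} r * (2 / sqrt r))"
      have "(\<integral>\<^sup>+s. ?c * ennreal (indicator {r..} s * ((g s)\<^sup>2 * (s * sqrt s))) \<partial>lborel)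
          = (\<integral>\<^sup>+s. ?c * ennreal ((indicator {r..} s * g s)\<^sup>2 * (s * sqrt s)) \<partial>lborel)"
        using e by metis
      also have "\<dots> = ?c * (\<integral>\<^sup>+s. ennreal ((indicator {r..} s * g s)\<^sup>2 * (s * sqrt s)) \<partial>lborel)"
        by (rule nn_integral_cmult) measurable
      also have "\<dots> = ?c * (\<integral>\<^sup>+s. ennreal (indicator {r..} s * ((g s)\<^sup>2 * (s * sqrt s))) \<partial>lborel)"
        using e by metis
      finally show ?thesis .
    qed (simp add: indicator_def)
    finally have "ennreal (indicator {1..} r * (2 / sqrt r)) *
           (\<integral>\<^sup>+s. ennreal (indicator {r..} s * ((g s)\<^sup>2 * (s * sqrt s))) \<partial>lborel) = Q r" unfolding Q_def ..
    moreover have "ennreal (indicator {1..} r * (u r)\<^sup>2) \<le> ennreal (indicator {1..} r * (2 / sqrt r)) *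
           (\<integral>\<^sup>+s. ennreal (indicator {r..} s * ((g s)\<^sup>2 * (s * sqrt s))) \<partial>lborel)"
      using hardy_pt[OF R, of r] by (cases "r \<ge> 1") (auto simp: indicator_def)
    ultimately show ?thesis by simp
  qed
  have "(\<integral>\<^sup>+r. Q r \<partial>lborel) = (\<integral>\<^sup>+r. (\<integral>\<^sup>+s. F r s \<partial>lborel) \<partial>lborel)" unfolding Q_def ..
  also have "\<dots> = (\<integral>\<^sup>+s. (\<integral>\<^sup>+r. F r s \<partial>lborel) \<partial>lborel)"
    using lborel_pair.Fubini'[OF Fm] by simp
  also have "\<dots> \<le> (\<integral>\<^sup>+s. ennreal 4 * ennreal (indicator {1..} s * ((g s)\<^sup>2 * s\<^sup>2)) \<partial>lborel)"
  proof (intro nn_integral_mono)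
    fix s :: real
    show "(\<integral>\<^sup>+r. F r s \<partial>lborel) \<le> ennreal 4 * ennreal (indicator {1..} s * ((g s)\<^sup>2 * s\<^sup>2))"
    proof (cases "s \<ge> 1")
      case False
      then have "F r s = 0" for r unfolding F_def G1_def by (simp add: indicator_def)
      then show ?thesis by simp
    next
      case True
      have "(\<integral>\<^sup>+r. F r s \<partial>lborel) = (\<integral>\<^sup>+r. ennreal (indicator {1..s} r * (2 / sqrt r)) *
          ennreal ((g s)\<^sup>2 * (s * sqrt s)) \<partial>lborel)"
        unfolding F_def G1_def using True
        by (intro nn_integral_cong) (auto simp: indicator_def)
      also have "\<dots> = (\<integral>\<^sup>+r. ennreal (indicator {1..s} r * (2 / sqrt r)) \<partial>lborel) * ennreal ((g s)\<^sup>2 * (s * sqrt s))"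
        by (rule nn_integral_multc) measurable
      also have "\<dots> \<le> ennreal (4 * sqrt s) * ennreal ((g s)\<^sup>2 * (s * sqrt s))"
        by (intro mult_right_mono nn_sqrt_Icc True) simp
      also have "\<dots> = ennreal 4 * ennreal (indicator {1..} s * ((g s)\<^sup>2 * s\<^sup>2))"
      proof -
        have ss: "sqrt s * sqrt s = s" using True by simp
        have "(4 * sqrt s) * ((g s)\<^sup>2 * (s * sqrt s)) = 4 * (g s)\<^sup>2 * s * (sqrt s * sqrt s)"
          by (simp add: algebra_simps)
        also have "\<dots> = 4 * (indicator {1..} s * ((g s)\<^sup>2 * s\<^sup>2))"
          using True unfolding ss by (simp add: indicator_def power2_eq_square)
        finally have e4: "(4 * sqrt s) * ((g s)\<^sup>2 * (s * sqrt s)) = 4 * (indicator {1..} s * ((g s)\<^sup>2 * s\<^sup>2))" .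
        have "ennreal (4 * sqrt s) * ennreal ((g s)\<^sup>2 * (s * sqrt s)) = ennreal ((4 * sqrt s) * ((g s)\<^sup>2 * (s * sqrt s)))"
          using True by (simp add: ennreal_mult)
        also have "\<dots> = ennreal 4 * ennreal (indicator {1..} s * ((g s)\<^sup>2 * s\<^sup>2))"
          unfolding e4 by (simp add: ennreal_mult)
        finally show ?thesis .
      qed
      finally show ?thesis .
    qed
  qed
  also have "\<dots> = 4 * (\<integral>\<^sup>+s. ennreal (indicator {1..} s * ((g s)\<^sup>2 * s\<^sup>2)) \<partial>lborel)"
  proof -
    have e1: "\<And>s. indicator {1..} s * ((g s)\<^sup>2 * s\<^sup>2) = (G1 s)\<^sup>2 * s\<^sup>2"
      by (auto simp: G1_def indicator_def)
    have mm: "(\<lambda>s. ennreal ((G1 s)\<^sup>2 * s\<^sup>2)) \<in> borel_measurable lborel" by measurable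
    show ?thesis unfolding e1 using nn_integral_cmult[OF mm, of 4] by (simp only: ennreal_numeral)
  qed
  finally show ?thesis using Qm Qpt by blast
qed

lemma L6_bound:
  assumes R: "rad_H1 {1..} u g" and m: "m \<ge> 0" and bd: "\<And>r. r \<ge> 1 \<Longrightarrow> sqrt r * \<bar>u r\<bar> \<le> m"
  shows "(LINT r:{1..}|lborel. \<bar>u r\<bar> ^ 6 * r\<^sup>2) \<le> 4 * m ^ 4 * (LINT r:{1..}|lborel. (g r)\<^sup>2 * r\<^sup>2)"
proof -
  have iu: "set_integrable lborel {1..} (\<lambda>r. \<bar>u r\<bar> ^ 6 * r\<^sup>2)"
    and ig: "set_integrable lborel {1..} (\<lambda>r. (g r)\<^sup>2 * r\<^sup>2)" using R unfolding rad_H1_def by auto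
  define IU where "IU = (LINT r:{1..}|lborel. \<bar>u r\<bar> ^ 6 * r\<^sup>2)"
  define IG where "IG = (LINT r:{1..}|lborel. (g r)\<^sup>2 * r\<^sup>2)"
  have E1: "(\<integral>\<^sup>+r. ennreal (indicator {1..} r * (\<bar>u r\<bar> ^ 6 * r\<^sup>2)) \<partial>lborel) = ennreal IU"
    unfolding IU_def set_lebesgue_integral_def
    using nn_integral_eq_integral[OF iu[unfolded set_integrable_def]] by simp
  have E2: "(\<integral>\<^sup>+r. ennreal (indicator {1..} r * ((g r)\<^sup>2 * r\<^sup>2)) \<partial>lborel) = ennreal IG"
    unfolding IG_def set_lebesgue_integral_def
    using nn_integral_eq_integral[OF ig[unfolded set_integrable_def]] by simp
  have IG0: "IG \<ge> 0" unfolding IG_def set_lebesgue_integral_def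
    by (intro Bochner_Integration.integral_nonneg) (auto simp: indicator_def)
  obtain Q where Qm: "Q \<in> borel_measurable lborel"
    and Qpt: "\<And>r. ennreal (indicator {1..} r * (u r)\<^sup>2) \<le> Q r"
    and Qi: "(\<integral>\<^sup>+r. Q r \<partial>lborel) \<le> 4 * (\<integral>\<^sup>+s. ennreal (indicator {1..} s * ((g s)\<^sup>2 * s\<^sup>2)) \<partial>lborel)"
    using hardy[OF R] by blast
  have pt: "ennreal (indicator {1..} r * (\<bar>u r\<bar> ^ 6 * r\<^sup>2)) \<le> ennreal (m ^ 4) * Q r" for r
  proof (cases "r \<ge> 1")
    case True
    have sq: "(sqrt r) ^ 4 = r\<^sup>2" using True
      by (metis (no_types) numeral_Bit0 power_add power2_eq_square real_sqrt_pow2 zero_le_one order_trans)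
    have "\<bar>u r\<bar> ^ 6 * r\<^sup>2 = (sqrt r * \<bar>u r\<bar>) ^ 4 * (u r)\<^sup>2"
      unfolding power_mult_distrib sq by (simp add: power2_eq_square eval_nat_numeral)
    also have "\<dots> \<le> m ^ 4 * (u r)\<^sup>2"
      using bd[OF True] True by (intro mult_right_mono power_mono) auto
    finally have "ennreal (indicator {1..} r * (\<bar>u r\<bar> ^ 6 * r\<^sup>2)) \<le> ennreal (m ^ 4) * ennreal (indicator {1..} r * (u r)\<^sup>2)"
      using True m by (simp add: ennreal_mult[symmetric] ennreal_leI)
    also have "\<dots> \<le> ennreal (m ^ 4) * Q r" by (intro mult_left_mono Qpt) simp
    finally show ?thesis .
  qed (simp add: indicator_def)
  have "ennreal IU \<le> (\<integral>\<^sup>+r. ennreal (m ^ 4) * Q r \<partial>lborel)"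
    unfolding E1[symmetric] by (intro nn_integral_mono pt)
  also have "\<dots> = ennreal (m ^ 4) * (\<integral>\<^sup>+r. Q r \<partial>lborel)"
    by (rule nn_integral_cmult[OF Qm])
  also have "\<dots> \<le> ennreal (m ^ 4) * (4 * ennreal IG)"
    using Qi unfolding E2 by (intro mult_left_mono) auto
  also have "\<dots> = ennreal (4 * m ^ 4 * IG)"
    using m IG0 by (simp add: ennreal_mult mult_ac)
  finally have "ennreal IU \<le> ennreal (4 * m ^ 4 * IG)" .
  then show ?thesis unfolding IU_def[symmetric] IG_def[symmetric]
    using m IG0 by (subst (asm) ennreal_le_iff) auto
qed

primrec pickP :: "(nat \<Rightarrow> nat \<Rightarrow> bool) \<Rightarrow> nat \<Rightarrow> nat" where
  "pickP P 0 = (SOME n. P 0 n)"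
| "pickP P (Suc k) = (SOME n. n > pickP P k \<and> P (Suc k) n)"

lemma pickP:
  assumes "\<And>k M. \<exists>n>M. P k n"
  shows "strict_mono (pickP P) \<and> (\<forall>k. P k (pickP P k))"
proof -
  have A: "pickP P (Suc k) > pickP P k \<and> P (Suc k) (pickP P (Suc k))" for k
    using someI_ex[OF assms[where k="Suc k" and M="pickP P k"]] by simp
  have B: "P 0 (pickP P 0)"
    using someI_ex[of "P 0"] assms[where k=0 and M=0] by auto
  have "strict_mono (pickP P)" using A by (simp add: strict_mono_Suc_iff)
  moreover have "P k (pickP P k)" for k using A B by (cases k) auto
  ultimately show ?thesis by blast
qed

lemma powr6:
  fixes x e :: real
  assumes "x \<ge> 0" "0 < e" "e \<le> x powr (1/6)"
  shows "e ^ 6 \<le> x"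
proof -
  have x0: "x > 0" using assms by (cases "x = 0") auto
  have "e ^ 6 \<le> (x powr (1/6)) ^ 6" using assms by (intro power_mono) auto
  also have "(x powr (1/6)) ^ 6 = x" using x0
    by (simp add: powr_realpow[symmetric] powr_powr)
  finally show ?thesis .
qed

theorem lemma4p2:
  fixes f :: "nat \<Rightarrow> real \<Rightarrow> real"
  assumes bounded: "\<exists>C. \<forall>n. \<exists>g. Hdot1_ext (f n) g \<and> Hdot1_ext_normsq g \<le> C"
    and weak: "\<And>lam :: nat \<Rightarrow> real.
       (\<forall>n. lam n > 0) \<Longrightarrow> (filterlim lam at_top sequentially \<or> (\<forall>n. lam n = 1)) \<Longrightarrow>
       weak_zero_Hdot1 (\<lambda>n r. sqrt (lam n) * ext_P (f n) (lam n * r))"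
  shows "\<exists>s. strict_mono s \<and> (\<lambda>k. L6_ext_norm (f (s k))) \<longlonglongrightarrow> 0"
proof (rule ccontr)
  assume nosub: "\<not> (\<exists>s. strict_mono s \<and> (\<lambda>k. L6_ext_norm (f (s k))) \<longlonglongrightarrow> 0)"
  define a where "a = (\<lambda>n. L6_ext_norm (f n))"
  have a0: "a n \<ge> 0" for n unfolding a_def L6_ext_norm_def by simp
  obtain eps N where eps: "eps > 0" and epsN: "\<And>n. n \<ge> N \<Longrightarrow> a n \<ge> eps"
  proof (rule ccontr)
    assume "\<not> thesis"
    with that have H: "\<forall>e>0. \<forall>N. \<exists>n\<ge>N. a n < e" by (meson not_le)
    let ?P = "\<lambda>k n. a n < 1 / (real k + 1)"
    have "\<exists>n>M. ?P k n" for k M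
      using H[rule_format, of "1 / (real k + 1)" "Suc M"] by (auto simp: Suc_le_eq)
    then have sP: "strict_mono (pickP ?P) \<and> (\<forall>k. ?P k (pickP ?P k))" by (rule pickP)
    have "(\<lambda>k. a (pickP ?P k)) \<longlonglongrightarrow> 0"
    proof (rule tendsto_sandwich[of "\<lambda>_. 0" _ _ "\<lambda>k. 1 / (real k + 1)"])
      show "\<forall>\<^sub>F k in sequentially. 0 \<le> a (pickP ?P k)" using a0 by simp
      show "\<forall>\<^sub>F k in sequentially. a (pickP ?P k) \<le> 1 / (real k + 1)"
        using sP by (intro always_eventually) (auto intro: less_imp_le)
      show "(\<lambda>k. 1 / (real k + 1)) \<longlonglongrightarrow> 0" by real_asymp
    qed simp
    with sP nosub show False unfolding a_def by blast
  qed
  from bounded obtain C where "\<forall>n. \<exists>g. Hdot1_ext (f n) g \<and> Hdot1_ext_normsq g \<le> C" by blast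
  then have "\<exists>g. \<forall>n. Hdot1_ext (f n) (g n) \<and> Hdot1_ext_normsq (g n) \<le> C" by (rule choice)
  then obtain g where g: "\<And>n. Hdot1_ext (f n) (g n)" and gC: "\<And>n. Hdot1_ext_normsq (g n) \<le> C"
    by blast
  have R: "rad_H1 {1..} (f n) (g n)" for n using g unfolding Hdot1_ext_def by blast
  define A where "A = (\<lambda>n. LINT r:{1..}|lborel. (g n r)\<^sup>2 * r\<^sup>2)"
  define C' where "C' = C / (4 * pi)"
  have A0: "A n \<ge> 0" for n unfolding A_def set_lebesgue_integral_def
    by (intro Bochner_Integration.integral_nonneg) (auto simp: indicator_def)
  have AC: "A n \<le> C'" for n using gC[of n] unfolding A_def C'_def Hdot1_ext_normsq_def
    by (simp add: field_simps)
  have C'0: "C' \<ge> 0" using A0[of 0] AC[of 0] by linarith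
  define D where "D = eps ^ 6 / (4 * pi)"
  have D0: "D > 0" unfolding D_def using eps by simp
  define m where "m = min 1 (D / (8 * (C' + 1)))"
  have m0: "m > 0" unfolding m_def using D0 C'0 by simp
  have m1: "m \<le> 1" unfolding m_def by simp
  have mD: "4 * m ^ 4 * C' < D"
  proof -
    have "m ^ 4 \<le> m" using m0 m1 by (simp add: power_le_one_iff power_decreasing[of 1 4 m, simplified])
    then have "4 * m ^ 4 * C' \<le> 4 * m * C'" using C'0 by (intro mult_right_mono) auto
    also have "\<dots> \<le> 4 * (D / (8 * (C' + 1))) * C'" using C'0 m0
      by (intro mult_right_mono) (auto simp: m_def)
    also have "\<dots> = D * (C' / (2 * (C' + 1)))" using C'0 by (simp add: field_simps)
    also have "\<dots> < D * 1" using D0 C'0 by (intro mult_strict_left_mono) (auto simp: field_simps)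
    finally show ?thesis by simp
  qed
  have exr: "\<exists>r\<ge>1. sqrt r * \<bar>f n r\<bar> > m" if n: "n \<ge> N" for n
  proof (rule ccontr)
    assume "\<not> ?thesis"
    then have bd: "\<And>r. r \<ge> 1 \<Longrightarrow> sqrt r * \<bar>f n r\<bar> \<le> m" by (meson not_le)
    have I: "(LINT r:{1..}|lborel. \<bar>f n r\<bar> ^ 6 * r\<^sup>2) \<le> 4 * m ^ 4 * A n"
      unfolding A_def by (rule L6_bound[OF R]) (use m0 bd in auto)
    have I0: "(LINT r:{1..}|lborel. \<bar>f n r\<bar> ^ 6 * r\<^sup>2) \<ge> 0" unfolding set_lebesgue_integral_def
      by (intro Bochner_Integration.integral_nonneg) (auto simp: indicator_def)
    have "eps ^ 6 \<le> 4 * pi * (LINT r:{1..}|lborel. \<bar>f n r\<bar> ^ 6 * r\<^sup>2)"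
      by (rule powr6) (use I0 eps epsN[OF n] in \<open>auto simp: a_def L6_ext_norm_def\<close>)
    then have "D \<le> (LINT r:{1..}|lborel. \<bar>f n r\<bar> ^ 6 * r\<^sup>2)" unfolding D_def
      by (simp add: field_simps)
    also have "\<dots> \<le> 4 * m ^ 4 * A n" by (rule I)
    also have "\<dots> \<le> 4 * m ^ 4 * C'" using AC[of n] m0 by (intro mult_left_mono) auto
    finally show False using mD by simp
  qed
  define r where "r = (\<lambda>n. if n \<ge> N then (SOME r. r \<ge> 1 \<and> sqrt r * \<bar>f n r\<bar> > m) else 1)"
  have rN: "r n \<ge> 1 \<and> sqrt (r n) * \<bar>f n (r n)\<bar> > m" if "n \<ge> N" for n
  proof -
    have ex': "\<exists>r. r \<ge> 1 \<and> sqrt r * \<bar>f n r\<bar> > m" using exr[OF that] by blast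
    have "(SOME r. r \<ge> 1 \<and> sqrt r * \<bar>f n r\<bar> > m) \<ge> 1 \<and>
      sqrt (SOME r. r \<ge> 1 \<and> sqrt r * \<bar>f n r\<bar> > m) * \<bar>f n (SOME r. r \<ge> 1 \<and> sqrt r * \<bar>f n r\<bar> > m)\<bar> > m"
      by (rule someI_ex[OF ex'])
    then show ?thesis using that by (simp add: r_def)
  qed
  have r1: "r n \<ge> 1" for n
    using rN[of n] by (cases "n \<ge> N") (auto simp: r_def)
  have rbig: "sqrt (r n) * \<bar>f n (r n)\<bar> > m" if "n \<ge> N" for n
    using rN[OF that] by blast
  show False
  proof (cases "\<exists>R. \<forall>n. r n \<le> R")
    case True
    then obtain R where R': "\<And>n. r n \<le> R" by blast
    define rho where "rho = (\<lambda>k. r (k + N))"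
    have "seq_compact {1..R}" by (rule compact_imp_seq_compact) simp
    moreover have "\<forall>k. rho k \<in> {1..R}" using r1 R' unfolding rho_def by auto
    ultimately obtain l sg where l: "l \<in> {1..R}" and sg: "strict_mono sg" and lim: "(rho \<circ> sg) \<longlonglongrightarrow> l"
      by (rule seq_compactE)
    have W: "weak_zero_Hdot1 (\<lambda>n r. sqrt ((\<lambda>_. 1::real) n) * ext_P (f n) ((\<lambda>_. 1::real) n * r))"
      by (rule weak) auto
    have "(\<lambda>n. sqrt ((\<lambda>_. 1::real) n) * ext_P (f n) ((\<lambda>_. 1::real) n * l)) \<longlonglongrightarrow> 0"
      using weak_pointwise[OF W, of l] l by auto
    then have fl: "(\<lambda>n. f n l) \<longlonglongrightarrow> 0" using l by (simp add: ext_P_def)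
    define tau where "tau = (\<lambda>k. sg k + N)"
    have tau: "strict_mono tau" using sg unfolding tau_def strict_mono_def by auto
    have fl2: "(\<lambda>k. f (tau k) l) \<longlonglongrightarrow> 0"
      using LIMSEQ_subseq_LIMSEQ[OF fl tau] by (simp add: o_def)
    have rl: "(\<lambda>k. r (tau k)) \<longlonglongrightarrow> l" using lim unfolding rho_def tau_def by (simp add: o_def)
    have dif: "(\<lambda>k. f (tau k) (r (tau k)) - f (tau k) l) \<longlonglongrightarrow> 0"
    proof (rule Lim_null_comparison)
      show "\<forall>\<^sub>F k in sequentially. norm (f (tau k) (r (tau k)) - f (tau k) l) \<le> sqrt (C' * \<bar>r (tau k) - l\<bar>)"
      proof (rule always_eventually, rule allI)
        fix k
        let ?n = "tau k"
        have "(f ?n (r ?n) - f ?n l)\<^sup>2 \<le> A ?n * \<bar>r ?n - l\<bar>"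
        proof (cases "l \<le> r ?n")
          case True
          show ?thesis using diff_bound[OF R, of l "r ?n" ?n] True l unfolding A_def by auto
        next
          case False
          have "(f ?n l - f ?n (r ?n))\<^sup>2 \<le> A ?n * (l - r ?n)"
            using diff_bound[OF R, of "r ?n" l ?n] False r1[of ?n] unfolding A_def by auto
          then show ?thesis using False by (simp add: power2_commute)
        qed
        also have "\<dots> \<le> C' * \<bar>r ?n - l\<bar>" using AC[of ?n] by (intro mult_right_mono) auto
        finally have "(f ?n (r ?n) - f ?n l)\<^sup>2 \<le> C' * \<bar>r ?n - l\<bar>" .
        then show "norm (f ?n (r ?n) - f ?n l) \<le> sqrt (C' * \<bar>r ?n - l\<bar>)"
          using real_le_rsqrt by simp
      qed
      have "(\<lambda>k. sqrt (C' * \<bar>r (tau k) - l\<bar>)) \<longlonglongrightarrow> sqrt (C' * \<bar>l - l\<bar>)"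
        by (intro tendsto_intros rl)
      then show "(\<lambda>k. sqrt (C' * \<bar>r (tau k) - l\<bar>)) \<longlonglongrightarrow> 0" by simp
    qed
    have "(\<lambda>k. (f (tau k) (r (tau k)) - f (tau k) l) + f (tau k) l) \<longlonglongrightarrow> 0 + 0"
      by (intro tendsto_add dif fl2)
    then have z: "(\<lambda>k. f (tau k) (r (tau k))) \<longlonglongrightarrow> 0" by simp
    have Rpos: "R \<ge> 1" using r1[of 0] R'[of 0] by simp
    have "m / sqrt R > 0" using m0 Rpos by simp
    with z have "\<forall>\<^sub>F k in sequentially. \<bar>f (tau k) (r (tau k))\<bar> < m / sqrt R"
      using tendstoD[OF z, of "m / sqrt R"] by (simp add: dist_real_def)
    then obtain k where k: "\<bar>f (tau k) (r (tau k))\<bar> < m / sqrt R"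
      unfolding eventually_sequentially by blast
    have big: "sqrt (r (tau k)) * \<bar>f (tau k) (r (tau k))\<bar> > m" using rbig[of "tau k"] unfolding tau_def by simp
    have "sqrt (r (tau k)) \<le> sqrt R" using R' by simp
    then have "sqrt (r (tau k)) * \<bar>f (tau k) (r (tau k))\<bar> \<le> sqrt R * \<bar>f (tau k) (r (tau k))\<bar>"
      by (intro mult_right_mono) auto
    also have "\<dots> < sqrt R * (m / sqrt R)" using k Rpos by (intro mult_strict_left_mono) auto
    also have "\<dots> = m" using Rpos by simp
    finally show False using big by simp
  next
    case False
    have unb: "\<exists>n>M. r n > Rb" for M Rb
    proof (rule ccontr)
      assume "\<not> ?thesis"
      then have le: "\<And>n. n > M \<Longrightarrow> r n \<le> Rb" by (meson not_le)
      have "r n \<le> max Rb (Max (r ` {..M}))" for n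
      proof (cases "n > M")
        case True
        have "r n \<le> Rb" using le[OF True] .
        then show ?thesis by linarith
      next
        case False then have "r n \<le> Max (r ` {..M})" by (intro Max_ge) auto
        then show ?thesis by simp
      qed
      with False show False by blast
    qed
    let ?P = "\<lambda>k n. n \<ge> N \<and> r n > real k + 1"
    have "\<exists>n>M. ?P k n" for k M
    proof -
      obtain n where n: "n > M + N" "r n > real k + 1" using unb[of "M + N" "real k + 1"] by blast
      then show ?thesis by (intro exI[of _ n]) auto
    qed
    then have sP: "strict_mono (pickP ?P) \<and> (\<forall>k. ?P k (pickP ?P k))" by (rule pickP)
    define sg where "sg = pickP ?P"
    have sg: "strict_mono sg" and sgP: "\<And>k. sg k \<ge> N" "\<And>k. r (sg k) > real k + 1"
      using sP unfolding sg_def by auto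
    define lam where "lam = (\<lambda>n. if n \<in> range sg then r n else real n + 1)"
    have lam0: "\<forall>n. lam n > 0" unfolding lam_def using r1 by (auto intro: less_le_trans[of 0 1])
    have lamtop: "filterlim lam at_top sequentially"
    proof (subst filterlim_at_top, intro allI)
      fix Z :: real
      define K where "K = nat \<lceil>Z\<rceil>"
      have ZK: "Z \<le> real K" unfolding K_def by linarith
      show "\<forall>\<^sub>F n in sequentially. Z \<le> lam n"
      proof (rule eventually_sequentiallyI[of "max (sg K) K"])
        fix n assume n: "max (sg K) K \<le> n"
        show "Z \<le> lam n"
        proof (cases "n \<in> range sg")
          case True
          then obtain k where k: "n = sg k" by auto
          have "K \<le> k" using n k sg by (simp add: strict_mono_less_eq)
          then have "Z \<le> real k + 1" using ZK by linarith
          then show ?thesis using sgP(2)[of k] True k unfolding lam_def by simp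
        next
          case False
          then show ?thesis using n ZK unfolding lam_def by simp
        qed
      qed
    qed
    have W: "weak_zero_Hdot1 (\<lambda>n r. sqrt (lam n) * ext_P (f n) (lam n * r))"
      by (rule weak) (use lam0 lamtop in auto)
    have "(\<lambda>n. sqrt (lam n) * ext_P (f n) (lam n * 1)) \<longlonglongrightarrow> 0"
      using weak_pointwise[OF W, of 1] by simp
    then have "(\<lambda>k. sqrt (lam (sg k)) * ext_P (f (sg k)) (lam (sg k) * 1)) \<longlonglongrightarrow> 0"
      using LIMSEQ_subseq_LIMSEQ[OF _ sg] by (simp add: o_def)
    moreover have "sqrt (lam (sg k)) * ext_P (f (sg k)) (lam (sg k) * 1) = sqrt (r (sg k)) * f (sg k) (r (sg k))" for k
      using r1[of "sg k"] unfolding lam_def ext_P_def by simp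
    ultimately have z: "(\<lambda>k. sqrt (r (sg k)) * f (sg k) (r (sg k))) \<longlonglongrightarrow> 0" by simp
    have "\<forall>\<^sub>F k in sequentially. dist (sqrt (r (sg k)) * f (sg k) (r (sg k))) 0 < m"
      using tendstoD[OF z m0] .
    then obtain k where k: "dist (sqrt (r (sg k)) * f (sg k) (r (sg k))) 0 < m"
      unfolding eventually_sequentially by blast
    have "sqrt (r (sg k)) * \<bar>f (sg k) (r (sg k))\<bar> > m" using rbig[OF sgP(1)[of k]] .
    with k r1[of "sg k"] show False by (simp add: abs_mult dist_real_def)
  qed
qed

end
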